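(* For every reduced two-rowed array ${\boldsymbol{\mathsf X}}$ (i.e. $\min\{{\sf x}_{k+1},{\sf y}_k\}\le 1$ for all $k$), $\mathcal F(\tilde f{\boldsymbol{\mathsf X}})=\tilde f\,\mathcal F({\boldsymbol{\mathsf X}})$, where $\mathcal F(0)=0$ by convention.
   Context: A two-rowed array is a family ${\boldsymbol{\mathsf X}}=({\sf x}_k;{\sf y}_k)_{k\in\mathbb Z}$ of non-negative integers with ${\sf x}_k={\sf y}_k=0$ for all but finitely many $k$; sums and differences are componentwise. ${\boldsymbol{\mathsf x}}_k(a)$ (resp. ${\boldsymbol{\mathsf y}}_k(a)$) is the array with ${\sf x}_k=a$ (resp. ${\sf y}_k=a$) and all other entries $0$. For $z\in\mathbb Z_{\ge0}$ write $z=2\,\mathrm{quo}(z)+\mathrm{rem}(z)$ with $\mathrm{rem}(z)\in\{0,1\}$. The map $\mathcal F$: given ${\boldsymbol{\mathsf X}}=({\sf x}_k;{\sf y}_k)$, put for all $k\in\mathbb Z$: ${\sf y}'_k=\mathrm{rem}({\sf y}_k)+2\,\mathrm{quo}({\sf y}_{k-1})$; ${\sf z}_k=\min\{{\sf x}_k,{\sf y}'_k\}$; ${\sf X}_k={\sf x}_k-{\sf z}_k+{\sf z}_{k-1}$; $\widetilde{\sf Y}_k={\sf y}'_k-{\sf z}_k+{\sf z}_{k-1}$; $\widetilde{\sf X}_k=\mathrm{rem}({\sf X}_k)+2\,\mathrm{quo}({\sf X}_{k-1})$; and $\mathcal F({\boldsymbol{\mathsf X}})=(\widetilde{\sf X}_k;\widetilde{\sf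 Y}_k)_{k\in\mathbb Z}$. Signature rule: the signature of ${\boldsymbol{\mathsf X}}$ is the finite sequence $\sigma({\boldsymbol{\mathsf X}})=(\cdots\,-^{{\sf y}_{k+1}}\,+^{{\sf x}_{k+1}}\,-^{{\sf y}_k}\,+^{{\sf x}_k}\,-^{{\sf y}_{k-1}}\,+^{{\sf x}_{k-1}}\cdots)$ (read left to right with $k$ decreasing; superscripts are multiplicities). Repeatedly cancel a pair $(+,-)$ in which the $+$ is to the left of the $-$ with only canceled symbols between them, until the reduced signature $\overline\sigma({\boldsymbol{\mathsf X}})$ has the form $(-\cdots-+\cdots+)$. If the leftmost $+$ of $\overline\sigma({\boldsymbol{\mathsf X}})$ comes from $+^{{\sf x}_k}$, then $\tilde f{\boldsymbol{\mathsf X}}={\boldsymbol{\mathsf X}}-{\boldsymbol{\mathsf x}}_k(1)+{\boldsymbol{\mathsf y}}_k(1)$; if $\overline\sigma({\boldsymbol{\mathsf X}})$ has no $+$, then $\tilde f{\boldsymbol{\mathsf X}}=0$. *)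

theory Defs
  imports Main
begin

text \<open>A two-rowed array (x_k; y_k)_{k in Z}: a pair of functions int => nat
  (first row x, second row y); the finite-support condition is a separate predicate.\<close>
type_synonym array2 = "(int \<Rightarrow> nat) \<times> (int \<Rightarrow> nat)"

definition arr_supp :: "array2 \<Rightarrow> int set" where
  "arr_supp X = {k. fst X k \<noteq> 0 \<or> snd X k \<noteq> 0}"

definition two_rowed :: "array2 \<Rightarrow> bool" where
  "two_rowed X \<longleftrightarrow> finite (arr_supp X)"

definition reduced_array :: "array2 \<Rightarrow> bool" where
  "reduced_array X \<longleftrightarrow> (\<forall>k. min (fst X (k + 1)) (snd X k) \<le> 1)"

definition quo :: "nat \<Rightarrow> nat" where "quo z = z div 2"
definition rem :: "nat \<Rightarrow> nat" where "rem z = z mod 2"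

definition Fmap :: "array2 \<Rightarrow> array2" where
  "Fmap X = (let x = fst X; y = snd X;
       y' = (\<lambda>k. rem (y k) + 2 * quo (y (k - 1)));
       z = (\<lambda>k. min (x k) (y' k));
       XX = (\<lambda>k. x k - z k + z (k - 1));
       Yt = (\<lambda>k. y' k - z k + z (k - 1));
       Xt = (\<lambda>k. rem (XX k) + 2 * quo (XX (k - 1)))
     in (Xt, Yt))"

text \<open>Signature: a list of symbols (True = +, False = -) tagged with the index k
  they come from, read with k decreasing; for each k: -^{y_k} then +^{x_k}.\<close>
definition signature :: "array2 \<Rightarrow> (bool \<times> int) list" where
  "signature X = concat (map (\<lambda>k. replicate (snd X k) (False, k) @ replicate (fst X k) (True, k))
                          (rev (sorted_list_of_set (arr_supp X))))"

text \<open>Cancellation of (+,-) pairs (+ left of -, only cancelled symbols between),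
  carried out by the standard left-to-right stack procedure; st is the reversed
  list of uncancelled symbols read so far.\<close>
fun cancel_aux :: "(bool \<times> int) list \<Rightarrow> (bool \<times> int) list \<Rightarrow> (bool \<times> int) list" where
  "cancel_aux st [] = rev st"
| "cancel_aux st (s # ss) =
     (if \<not> fst s \<and> st \<noteq> [] \<and> fst (hd st) then cancel_aux (tl st) ss else cancel_aux (s # st) ss)"

definition reduced_signature :: "array2 \<Rightarrow> (bool \<times> int) list" where
  "reduced_signature X = cancel_aux [] (signature X)"

text \<open>Kashiwara operator f~; None represents 0.\<close>
definition ftilde :: "array2 \<Rightarrow> array2 option" where
  "ftilde X = (case find fst (reduced_signature X) of
       None \<Rightarrow> None
     | Some (_, k) \<Rightarrow> Some ((fst X)(k := fst X k - 1), (snd X)(k := snd X k + 1)))"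

end

theory Submission
  imports Defs
begin


definition blk :: "array2 \<Rightarrow> int \<Rightarrow> (bool \<times> int) list" where
  "blk X k = replicate (snd X k) (False, k) @ replicate (fst X k) (True, k)"

fun stk :: "(bool \<times> int) list \<Rightarrow> (bool \<times> int) list \<Rightarrow> (bool \<times> int) list" where
  "stk st [] = st"
| "stk st (s # ss) = stk (if \<not> fst s \<and> st \<noteq> [] \<and> fst (hd st) then tl st else s # st) ss"

lemma cancel_stk: "cancel_aux st w = rev (stk st w)"
  by (induction st w rule: cancel_aux.induct) auto

lemma stk_append: "stk st (u @ v) = stk (stk st u) v"
  by (induction u arbitrary: st) auto

lemma stk_plus: "stk st (replicate n (True,k)) = replicate n (True,k) @ st"
  by (induction n arbitrary: st) (auto simp: replicate_app_Cons_same)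

lemma stk_minus:
  assumes "\<forall>p\<in>set ps. fst p" "\<forall>p\<in>set ms. \<not> fst p"
  shows "stk (ps @ ms) (replicate m (False,k)) = drop m ps @ (replicate (m - length ps) (False,k) @ ms)"
  using assms
proof (induction m arbitrary: ps ms)
  case 0
  then show ?case by simp
next
  case (Suc m)
  show ?case
  proof (cases ps)
    case Nil
    have "stk (ps @ ms) (replicate (Suc m) (False,k)) = stk ((False,k) # ms) (replicate m (False,k))"
      using Nil Suc.prems by (cases ms) auto
    also have "\<dots> = stk ([] @ ((False,k) # ms)) (replicate m (False,k))" by simp
    also have "\<dots> = replicate m (False,k) @ ((False,k) # ms)"
      using Suc.IH[of "[]" "(False,k) # ms"] Suc.prems by simp
    finally show ?thesis using Nil by (simp add: replicate_app_Cons_same)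
  next
    case (Cons p ps')
    then show ?thesis using Suc.IH[of ps' ms] Suc.prems by auto
  qed
qed

lemma stk_blk:
  assumes "\<forall>p\<in>set ps. fst p" "\<forall>p\<in>set ms. \<not> fst p"
  shows "stk (ps @ ms) (blk X k) = (replicate (fst X k) (True,k) @ drop (snd X k) ps)
            @ (replicate (snd X k - length ps) (False,k) @ ms)"
  unfolding blk_def stk_append using stk_minus[OF assms] stk_plus by simp

lemma find_append: "find P (xs @ ys) = (case find P xs of None \<Rightarrow> find P ys | Some x \<Rightarrow> Some x)"
  by (induction xs) auto

definition U :: "int \<Rightarrow> array2 \<Rightarrow> int \<Rightarrow> int" where
  "U lo X k = (\<Sum>i\<in>{lo..<k}. int (fst X i) - int (snd X i))"

definition T :: "int \<Rightarrow> array2 \<Rightarrow> int \<Rightarrow> int" where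
  "T lo X k = U lo X k + int (fst X k)"

definition condT :: "(int \<Rightarrow> int) \<Rightarrow> int \<Rightarrow> bool" where
  "condT f k0 \<longleftrightarrow> (\<forall>j<k0. f j < f k0) \<and> (\<forall>j>k0. f j \<le> f k0)"

definition zero_below :: "int \<Rightarrow> array2 \<Rightarrow> bool" where
  "zero_below lo X \<longleftrightarrow> (\<forall>i<lo. fst X i = 0 \<and> snd X i = 0)"

definition zero_above :: "int \<Rightarrow> array2 \<Rightarrow> bool" where
  "zero_above hi X \<longleftrightarrow> (\<forall>i>hi. fst X i = 0 \<and> snd X i = 0)"

lemma U_step:
  assumes "zero_below lo X"
  shows "U lo X (k+1) = U lo X k + int (fst X k) - int (snd X k)"
proof (cases "lo \<le> k")
  case True
  then have "{lo..<k+1} = insert k {lo..<k}" by auto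
  then show ?thesis unfolding U_def by simp
next
  case False
  then show ?thesis using assms unfolding U_def zero_below_def by simp
qed

lemma U_below: "k \<le> lo \<Longrightarrow> U lo X k = 0"
  unfolding U_def by simp

lemma T_below: "zero_below lo X \<Longrightarrow> k < lo \<Longrightarrow> T lo X k = 0"
  unfolding T_def zero_below_def using U_below[of k lo X] by simp

lemma U_above:
  assumes "zero_below lo X" "zero_above hi X" "hi < j"
  shows "U lo X j = U lo X (hi+1)"
proof -
  have "hi + 1 \<le> j" using assms by simp
  then show ?thesis
  proof (induction j rule: int_ge_induct)
    case base
    then show ?case by simp
  next
    case (step i)
    then show ?case using U_step[OF assms(1), of i] assms(2) unfolding zero_above_def by simp
  qed
qed

lemma T_above:
  assumes "zero_below lo X" "zero_above hi X" "hi < j"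
  shows "T lo X j \<le> T lo X hi"
proof -
  have "T lo X j = U lo X (hi+1)" using U_above[OF assms] assms(2,3) unfolding T_def zero_above_def by simp
  also have "\<dots> \<le> T lo X hi" using U_step[OF assms(1), of hi] unfolding T_def by simp
  finally show ?thesis .
qed

definition Inv :: "int \<Rightarrow> array2 \<Rightarrow> int \<Rightarrow> int \<Rightarrow> (bool \<times> int) list \<Rightarrow> bool" where
  "Inv lo X hi k st \<longleftrightarrow> (\<exists>ps ms. st = ps @ ms \<and> (\<forall>p\<in>set ps. fst p) \<and> (\<forall>p\<in>set ms. \<not> fst p)
     \<and> (\<forall>j\<in>{k..hi}. T lo X j \<le> U lo X k + int (length ps))
     \<and> (ps \<noteq> [] \<longrightarrow> (\<exists>b\<in>{k..hi}. last ps = (True, b) \<and> T lo X b = U lo X k + int (length ps)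
            \<and> (\<forall>j\<in>{k..<b}. T lo X j < T lo X b))))"

lemma Inv_step:
  assumes zb: "zero_below lo X" and inv: "Inv lo X hi k st" and khi: "k \<le> hi"
  shows "Inv lo X hi (k-1) (stk st (blk X (k-1)))"
proof -
  obtain ps ms where st: "st = ps @ ms" and ps: "\<forall>p\<in>set ps. fst p" and ms: "\<forall>p\<in>set ms. \<not> fst p"
    and le: "\<forall>j\<in>{k..hi}. T lo X j \<le> U lo X k + int (length ps)"
    and lst: "ps \<noteq> [] \<longrightarrow> (\<exists>b\<in>{k..hi}. last ps = (True, b) \<and> T lo X b = U lo X k + int (length ps)
            \<and> (\<forall>j\<in>{k..<b}. T lo X j < T lo X b))"
    using inv unfolding Inv_def by blast
  define a where "a = fst X (k-1)"
  define c where "c = snd X (k-1)"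
  define ps' where "ps' = replicate a (True,k-1) @ drop c ps"
  define ms' where "ms' = replicate (c - length ps) (False,k-1) @ ms"
  have Uk: "U lo X k = U lo X (k-1) + int a - int c"
    using U_step[OF zb, of "k-1"] unfolding a_def c_def by simp
  have Tk1: "T lo X (k-1) = U lo X (k-1) + int a" unfolding T_def a_def by simp
  have new: "stk st (blk X (k-1)) = ps' @ ms'"
    unfolding st ps'_def ms'_def a_def c_def using stk_blk[OF ps ms] by simp
  have lenps': "int (length ps') = int a + (int (length ps) - int c) \<or> (length ps \<le> c \<and> length ps' = a)"
    unfolding ps'_def by auto
  have lenps'2: "length ps' = a + (length ps - c)" unfolding ps'_def by simp
  have A: "\<forall>p\<in>set ps'. fst p" unfolding ps'_def using ps by (auto dest: in_set_dropD)
  have B: "\<forall>p\<in>set ms'. \<not> fst p" unfolding ms'_def using ms by auto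
  have C: "\<forall>j\<in>{k-1..hi}. T lo X j \<le> U lo X (k-1) + int (length ps')"
  proof
    fix j assume j: "j \<in> {k-1..hi}"
    show "T lo X j \<le> U lo X (k-1) + int (length ps')"
    proof (cases "j = k-1")
      case True then show ?thesis using Tk1 lenps'2 by simp
    next
      case False
      then have "j \<in> {k..hi}" using j by auto
      then show ?thesis using le Uk lenps'2 by fastforce
    qed
  qed
  have D: "ps' \<noteq> [] \<longrightarrow> (\<exists>b\<in>{k-1..hi}. last ps' = (True, b) \<and> T lo X b = U lo X (k-1) + int (length ps')
            \<and> (\<forall>j\<in>{k-1..<b}. T lo X j < T lo X b))"
  proof
    assume ne: "ps' \<noteq> []"
    show "\<exists>b\<in>{k-1..hi}. last ps' = (True, b) \<and> T lo X b = U lo X (k-1) + int (length ps')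
            \<and> (\<forall>j\<in>{k-1..<b}. T lo X j < T lo X b)"
    proof (cases "c < length ps")
      case True
      then have psne: "ps \<noteq> []" by auto
      then obtain b where b: "b\<in>{k..hi}" "last ps = (True, b)" "T lo X b = U lo X k + int (length ps)"
            "\<forall>j\<in>{k..<b}. T lo X j < T lo X b" using lst by blast
      have "drop c ps \<noteq> []" using True by simp
      then have "last ps' = last ps" unfolding ps'_def by (simp add: last_drop)
      moreover have "T lo X b = U lo X (k-1) + int (length ps')" using b(3) Uk lenps'2 True by simp
      moreover have "\<forall>j\<in>{k-1..<b}. T lo X j < T lo X b"
      proof
        fix j assume j: "j \<in> {k-1..<b}"
        show "T lo X j < T lo X b"
        proof (cases "j = k-1")
          case True then show ?thesis using Tk1 b(3) Uk \<open>c < length ps\<close> by simp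
        next
          case False then show ?thesis using j b(4) by auto
        qed
      qed
      ultimately show ?thesis using b(1,2) by auto
    next
      case False
      then have "drop c ps = []" by simp
      then have ps'eq: "ps' = replicate a (True,k-1)" unfolding ps'_def by simp
      then have "a > 0" using ne by auto
      then have "last ps' = (True, k-1)" using ps'eq by simp
      moreover have "T lo X (k-1) = U lo X (k-1) + int (length ps')" using Tk1 ps'eq by simp
      moreover have "k - 1 \<in> {k-1..hi}"
        using khi by simp
      ultimately show ?thesis by auto
    qed
  qed
  show ?thesis unfolding Inv_def new using A B C D by blast
qed

lemma Inv_all:
  assumes zb: "zero_below lo X" and "k \<le> hi"
  shows "Inv lo X hi k (stk [] (concat (map (blk X) (rev [k..hi]))))"
  using assms(2)
proof (induction k rule: int_le_induct)
  case base
  have "stk ([] @ []) (blk X hi) = replicate (fst X hi) (True,hi) @ (replicate (snd X hi) (False,hi))"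
    using stk_blk[of "[]" "[]" X hi] by simp
  then show ?case unfolding Inv_def T_def
    by (rule_tac x="replicate (fst X hi) (True,hi)" in exI) auto
next
  case (step i)
  have "[i-1..hi] = (i-1) # [i..hi]" using upto_rec1[of "i-1" hi] step(1) by simp
  then have "stk [] (concat (map (blk X) (rev [i-1..hi]))) = stk (stk [] (concat (map (blk X) (rev [i..hi])))) (blk X (i-1))"
    by (simp add: stk_append)
  then show ?case using Inv_step[OF zb step(2) step(1)] by simp
qed

definition upd :: "array2 \<Rightarrow> int \<Rightarrow> array2" where
  "upd X b = ((fst X)(b := fst X b - 1), (snd X)(b := snd X b + 1))"

lemma concat_filter_empty: "(\<forall>k. \<not> P k \<longrightarrow> f k = []) \<Longrightarrow> concat (map f (filter P xs)) = concat (map f xs)"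
  by (induction xs) auto

lemma signature_eq:
  assumes zb: "zero_below lo X" and za: "zero_above hi X"
  shows "signature X = concat (map (blk X) (rev [lo..hi]))"
proof -
  let ?P = "\<lambda>k. k \<in> arr_supp X"
  have sub: "arr_supp X \<subseteq> {lo..hi}"
    using zb za unfolding arr_supp_def zero_below_def zero_above_def
    by (auto simp: not_less[symmetric])
  have eq: "arr_supp X = set (filter ?P [lo..hi])" using sub by auto
  have "sorted_list_of_set (arr_supp X) = sorted_list_of_set (set (filter ?P [lo..hi]))"
    using eq by (rule arg_cong)
  also have "\<dots> = sort (remdups (filter ?P [lo..hi]))"
    by (rule sorted_list_of_set_sort_remdups)
  also have "\<dots> = filter ?P [lo..hi]"
    by (simp add: distinct_remdups_id) (metis sorted_sort_id sorted_upto sorted_wrt_filter)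
  finally have "signature X = concat (map (blk X) (filter ?P (rev [lo..hi])))"
    unfolding signature_def blk_def by (simp add: rev_filter)
  also have "\<dots> = concat (map (blk X) (rev [lo..hi]))"
    by (rule concat_filter_empty) (auto simp: blk_def arr_supp_def)
  finally show ?thesis .
qed

lemma partA:
  assumes zb: "zero_below lo X" and za: "zero_above hi X" and lohi: "lo \<le> hi"
  shows "(\<exists>b. condT (T lo X) b \<and> ftilde X = Some (upd X b)) \<or> (ftilde X = None \<and> (\<forall>j. T lo X j \<le> 0))"
proof -
  have "Inv lo X hi lo (stk [] (signature X))"
    using Inv_all[OF zb lohi] signature_eq[OF zb za] by simp
  then obtain ps ms where st: "stk [] (signature X) = ps @ ms" and ps: "\<forall>p\<in>set ps. fst p" and ms: "\<forall>p\<in>set ms. \<not> fst p"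
    and le: "\<forall>j\<in>{lo..hi}. T lo X j \<le> U lo X lo + int (length ps)"
    and lst: "ps \<noteq> [] \<longrightarrow> (\<exists>b\<in>{lo..hi}. last ps = (True, b) \<and> T lo X b = U lo X lo + int (length ps)
            \<and> (\<forall>j\<in>{lo..<b}. T lo X j < T lo X b))"
    unfolding Inv_def by blast
  have U0: "U lo X lo = 0" by (simp add: U_below)
  have rs: "reduced_signature X = rev ms @ rev ps"
    unfolding reduced_signature_def cancel_stk st by simp
  have fm: "find fst (rev ms) = None" using ms by (metis find_None_iff set_rev)
  have fr: "find fst (reduced_signature X) = find fst (rev ps)"
    unfolding rs find_append fm by simp
  show ?thesis
  proof (cases "ps = []")
    case True
    have "ftilde X = None" unfolding ftilde_def fr True by simp
    moreover have "\<forall>j. T lo X j \<le> 0"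
    proof
      fix j
      have Thi: "T lo X hi \<le> 0" using le lohi U0 True by auto
      show "T lo X j \<le> 0"
      proof (cases "j < lo")
        case True then show ?thesis using T_below[OF zb] by simp
      next
        case False
        show ?thesis
        proof (cases "j \<le> hi")
          case True then show ?thesis using le U0 \<open>ps = []\<close> False by auto
        next
          case False then show ?thesis using T_above[OF zb za, of j] Thi by simp
        qed
      qed
    qed
    ultimately show ?thesis by blast
  next
    case False
    then obtain b where b: "b\<in>{lo..hi}" "last ps = (True, b)" "T lo X b = int (length ps)"
            "\<forall>j\<in>{lo..<b}. T lo X j < T lo X b" using lst U0 by auto
    have "find fst (rev ps) = Some (last ps)" using False b(2) by (induction ps rule: rev_induct) auto
    then have "find fst (rev ps) = Some (True, b)" using b(2) by simp
    then have ft: "ftilde X = Some (upd X b)" unfolding ftilde_def fr upd_def by simp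
    have pos: "T lo X b > 0" using b(3) False by simp
    have Thi: "T lo X hi \<le> T lo X b" using le lohi U0 b(3) by auto
    have "condT (T lo X) b"
      unfolding condT_def
    proof (intro conjI allI impI)
      fix j assume "j < b"
      then show "T lo X j < T lo X b"
        using b(4) T_below[OF zb, of j] pos by (cases "j < lo") auto
    next
      fix j assume "j > b"
      show "T lo X j \<le> T lo X b"
      proof (cases "j \<le> hi")
        case True then show ?thesis using le U0 b(1) b(3) \<open>j > b\<close> by auto
      next
        case False then show ?thesis using T_above[OF zb za, of j] Thi by simp
      qed
    qed
    then show ?thesis using ft by blast
  qed
qed



definition ypf :: "array2 \<Rightarrow> int \<Rightarrow> nat" where
  "ypf X k = snd X k mod 2 + 2 * (snd X (k-1) div 2)"
definition zf :: "array2 \<Rightarrow> int \<Rightarrow> nat" where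
  "zf X k = min (fst X k) (ypf X k)"
definition XXf :: "array2 \<Rightarrow> int \<Rightarrow> nat" where
  "XXf X k = fst X k - zf X k + zf X (k-1)"
definition cX :: "array2 \<Rightarrow> int \<Rightarrow> int" where
  "cX X k = int (XXf X k mod 2) - int (snd X (k-1) mod 2)"

lemma Fmap_alt: "Fmap X = (\<lambda>k. XXf X k mod 2 + 2 * (XXf X (k-1) div 2), \<lambda>k. ypf X k - zf X k + zf X (k-1))"
  by (simp add: Fmap_def Let_def rem_def quo_def XXf_def zf_def ypf_def)

lemma Fmap_fst: "fst (Fmap X) k = XXf X k mod 2 + 2 * (XXf X (k-1) div 2)"
  by (simp add: Fmap_alt)
lemma Fmap_snd: "snd (Fmap X) k = ypf X k - zf X k + zf X (k-1)"
  by (simp add: Fmap_alt)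

lemma upd_fst: "fst (upd X k0) k = (if k = k0 then fst X k0 - 1 else fst X k)"
  by (simp add: upd_def)
lemma upd_snd: "snd (upd X k0) k = (if k = k0 then snd X k0 + 1 else snd X k)"
  by (simp add: upd_def)

lemma ypf_other: "k \<noteq> k0 \<Longrightarrow> k \<noteq> k0 + 1 \<Longrightarrow> ypf (upd X k0) k = ypf X k"
  by (auto simp: ypf_def upd_snd)
lemma zf_other: "k \<noteq> k0 \<Longrightarrow> k \<noteq> k0 + 1 \<Longrightarrow> zf (upd X k0) k = zf X k"
  by (auto simp: zf_def upd_fst ypf_other)
lemma XXf_other: "k \<noteq> k0 \<Longrightarrow> k \<noteq> k0 + 1 \<Longrightarrow> k \<noteq> k0 + 2 \<Longrightarrow> XXf (upd X k0) k = XXf X k"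
  by (auto simp: XXf_def upd_fst zf_other)

lemma dm2: "(n::nat) = 2 * (n div 2) + n mod 2" "(n::nat) mod 2 < 2" by simp_all

lemma assemble:
  assumes f0: "XXf X' k0 mod 2 + 2 * (XXf X' (k0-1) div 2) = (if k0 = k1 then fst (Fmap X) k0 - 1 else fst (Fmap X) k0)"
  and f1: "XXf X' (k0+1) mod 2 + 2 * (XXf X' k0 div 2) = (if k0+1 = k1 then fst (Fmap X) (k0+1) - 1 else fst (Fmap X) (k0+1))"
  and f2: "XXf X' (k0+2) mod 2 + 2 * (XXf X' (k0+1) div 2) = (if k0+2 = k1 then fst (Fmap X) (k0+2) - 1 else fst (Fmap X) (k0+2))"
  and f3: "XXf X' (k0+3) mod 2 + 2 * (XXf X' (k0+2) div 2) = (if k0+3 = k1 then fst (Fmap X) (k0+3) - 1 else fst (Fmap X) (k0+3))"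
  and s0: "ypf X' k0 - zf X' k0 + zf X' (k0-1) = (if k0 = k1 then snd (Fmap X) k0 + 1 else snd (Fmap X) k0)"
  and s1: "ypf X' (k0+1) - zf X' (k0+1) + zf X' k0 = (if k0+1 = k1 then snd (Fmap X) (k0+1) + 1 else snd (Fmap X) (k0+1))"
  and s2: "ypf X' (k0+2) - zf X' (k0+2) + zf X' (k0+1) = (if k0+2 = k1 then snd (Fmap X) (k0+2) + 1 else snd (Fmap X) (k0+2))"
  and oX: "\<And>k. k \<noteq> k0 \<Longrightarrow> k \<noteq> k0 + 1 \<Longrightarrow> k \<noteq> k0 + 2 \<Longrightarrow> XXf X' k = XXf X k"
  and oy: "\<And>k. k \<noteq> k0 \<Longrightarrow> k \<noteq> k0 + 1 \<Longrightarrow> ypf X' k = ypf X k"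
  and oz: "\<And>k. k \<noteq> k0 \<Longrightarrow> k \<noteq> k0 + 1 \<Longrightarrow> zf X' k = zf X k"
  and k1: "k1 \<in> {k0, k0+1, k0+2}"
  shows "Fmap X' = upd (Fmap X) k1"
proof -
  have A: "fst (Fmap X') k = fst (upd (Fmap X) k1) k" for k
  proof -
    consider "k = k0" | "k = k0+1" | "k = k0+2" | "k = k0+3" | "k \<notin> {k0, k0+1, k0+2, k0+3}" by blast
    then show ?thesis
    proof cases
      case 1 then show ?thesis using f0 by (simp add: Fmap_fst upd_fst)
    next
      case 2 then show ?thesis using f1 by (simp add: Fmap_fst upd_fst)
    next
      case 3 then show ?thesis using f2 k1 by (auto simp: Fmap_fst upd_fst add.commute)
    next
      case 4 then show ?thesis using f3 k1 by (auto simp: Fmap_fst upd_fst add.commute)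
    next
      case 5
      then have "k \<noteq> k1" using k1 by auto
      moreover have "XXf X' k = XXf X k" using 5 oX by auto
      moreover have "XXf X' (k-1) = XXf X (k-1)" using 5 by (intro oX) auto
      ultimately show ?thesis by (simp add: Fmap_fst upd_fst)
    qed
  qed
  have B: "snd (Fmap X') k = snd (upd (Fmap X) k1) k" for k
  proof -
    consider "k = k0" | "k = k0+1" | "k = k0+2" | "k \<notin> {k0, k0+1, k0+2}" by blast
    then show ?thesis
    proof cases
      case 1 then show ?thesis using s0 by (simp add: Fmap_snd upd_snd)
    next
      case 2 then show ?thesis using s1 by (simp add: Fmap_snd upd_snd)
    next
      case 3 then show ?thesis using s2 k1 by (auto simp: Fmap_snd upd_snd add.commute)
    next
      case 4
      then have "k \<noteq> k1" using k1 by auto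
      moreover have "ypf X' k = ypf X k" "zf X' k = zf X k" using 4 oy oz by auto
      moreover have "zf X' (k-1) = zf X (k-1)" using 4 by (intro oz) auto
      ultimately show ?thesis by (simp add: Fmap_snd upd_snd)
    qed
  qed
  show ?thesis using A B by (simp add: prod_eq_iff fun_eq_iff)
qed

lemma par0: "(n::nat) mod 2 = 0 \<Longrightarrow> (n+1) mod 2 = 1 \<and> (n+1) div 2 = n div 2" by presburger
lemma par1: "(n::nat) mod 2 = 1 \<Longrightarrow> (n+1) mod 2 = 0 \<and> (n+1) div 2 = n div 2 + 1" by presburger
lemma evn: "(n::nat) mod 2 = 0 \<Longrightarrow> n = 2 * (n div 2)" by presburger
lemma odd1: "(n::nat) mod 2 = 1 \<Longrightarrow> n = 2 * (n div 2) + 1" by presburger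
lemma mod2_cases: "(n::nat) mod 2 = 0 \<or> n mod 2 = 1" by presburger
lemma m2a: "(2 * a + 1) mod 2 = (1::nat)" "(2 * a + 1) div 2 = (a::nat)" "(2 * a) mod 2 = (0::nat)" "(2 * a) div 2 = (a::nat)"
  by simp_all

lemma caseB:
  assumes C1: "snd X (k0-1) < fst X k0" and C2: "snd X (k0-2) + snd X (k0-1) < fst X (k0-1) + fst X k0"
  and r0: "snd X k0 mod 2 = 0" and B: "fst X k0 = ypf X k0 + 1"
  shows "Fmap (upd X k0) = upd (Fmap X) k0 \<and> cX X k0 = int (fst X k0) - int (snd X (k0-1))"
proof -
  define X' where "X' = upd X k0"
  have yp0: "ypf X' k0 = ypf X k0 + 1" using par0[OF r0] r0 by (simp add: X'_def ypf_def upd_snd)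
  have yp1: "ypf X' (k0+1) = ypf X (k0+1)" using par0[OF r0] by (simp add: X'_def ypf_def upd_snd)
  have z1: "zf X' (k0+1) = zf X (k0+1)" using yp1 by (simp add: X'_def zf_def upd_fst)
  have zk0: "zf X k0 = fst X k0 - 1" using B by (simp add: zf_def)
  have z0: "zf X' k0 = zf X k0" using B yp0 zk0 by (simp add: X'_def zf_def upd_fst)
  have zm1: "zf X' (k0-1) = zf X (k0-1)" unfolding X'_def by (rule zf_other) auto
  have ym1e: "snd X (k0-1) mod 2 = 0" using B C1 r0 dm2[of "snd X (k0-1)"] unfolding ypf_def by linarith
  have zm1e: "zf X (k0-1) = 2 * (snd X (k0-2) div 2)"
  proof -
    have "snd X (k0-2) \<le> fst X (k0-1)" using C2 B C1 r0 ym1e dm2[of "snd X (k0-1)"] unfolding ypf_def by linarith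
    moreover have "2 * (snd X (k0-2) div 2) \<le> snd X (k0-2)" by simp
    ultimately show ?thesis using ym1e by (simp add: zf_def ypf_def algebra_simps)
  qed
  have XX0: "XXf X k0 = 2 * (snd X (k0-2) div 2) + 1" using zk0 zm1e C1 by (simp add: XXf_def)
  have XX0': "XXf X' k0 = 2 * (snd X (k0-2) div 2)" using z0 zk0 zm1 zm1e C1 by (simp add: XXf_def X'_def upd_fst)
  have XX1: "XXf X' (k0+1) = XXf X (k0+1)" using z1 z0 by (simp add: XXf_def X'_def upd_fst)
  have XX2: "XXf X' (k0+2) = XXf X (k0+2)" using z1 by (simp add: XXf_def X'_def upd_fst zf_other add.commute)
  have XX3: "XXf X' (k0+3) = XXf X (k0+3)" unfolding X'_def by (rule XXf_other) auto
  have XXm1: "XXf X' (k0-1) = XXf X (k0-1)" unfolding X'_def by (rule XXf_other) auto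
  have F: "Fmap X' = upd (Fmap X) k0"
  proof (rule assemble)
    show "XXf X' k0 mod 2 + 2 * (XXf X' (k0-1) div 2) = (if k0 = k0 then fst (Fmap X) k0 - 1 else fst (Fmap X) k0)"
      using XX0 XX0' XXm1 by (simp add: Fmap_fst m2a)
    show "XXf X' (k0+1) mod 2 + 2 * (XXf X' k0 div 2) = (if k0+1 = k0 then fst (Fmap X) (k0+1) - 1 else fst (Fmap X) (k0+1))"
      using XX0 XX0' XX1 by (simp add: Fmap_fst m2a)
    show "XXf X' (k0+2) mod 2 + 2 * (XXf X' (k0+1) div 2) = (if k0+2 = k0 then fst (Fmap X) (k0+2) - 1 else fst (Fmap X) (k0+2))"
      using XX1 XX2 by (simp add: Fmap_fst add.commute)
    show "XXf X' (k0+3) mod 2 + 2 * (XXf X' (k0+2) div 2) = (if k0+3 = k0 then fst (Fmap X) (k0+3) - 1 else fst (Fmap X) (k0+3))"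
      using XX3 XX2 by (simp add: Fmap_fst add.commute)
    show "ypf X' k0 - zf X' k0 + zf X' (k0-1) = (if k0 = k0 then snd (Fmap X) k0 + 1 else snd (Fmap X) k0)"
      using yp0 z0 zm1 zk0 B by (simp add: Fmap_snd)
    show "ypf X' (k0+1) - zf X' (k0+1) + zf X' k0 = (if k0+1 = k0 then snd (Fmap X) (k0+1) + 1 else snd (Fmap X) (k0+1))"
      using yp1 z1 z0 by (simp add: Fmap_snd)
    show "ypf X' (k0+2) - zf X' (k0+2) + zf X' (k0+1) = (if k0+2 = k0 then snd (Fmap X) (k0+2) + 1 else snd (Fmap X) (k0+2))"
      using z1 by (simp add: Fmap_snd X'_def ypf_other zf_other add.commute)
  qed (auto simp: X'_def XXf_other ypf_other zf_other)
  have "cX X k0 = int (fst X k0) - int (snd X (k0-1))"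
    using XX0 ym1e B r0 dm2[of "snd X (k0-1)"] unfolding cX_def ypf_def by simp
  then show ?thesis using F X'_def by simp
qed

lemma caseCD:
  assumes C1: "snd X (k0-1) < fst X k0" and C3: "fst X (k0+1) \<le> snd X k0"
  and r0: "snd X k0 mod 2 = 0" and CD: "fst X k0 \<ge> ypf X k0 + 2"
  shows "Fmap (upd X k0) = upd (Fmap X) (k0+1) \<and> cX X k0 < int (fst X k0) - int (snd X (k0-1)) \<and> cX X (k0+1) = 0"
proof -
  define X' where "X' = upd X k0"
  have yp0: "ypf X' k0 = ypf X k0 + 1" using par0[OF r0] r0 by (simp add: X'_def ypf_def upd_snd)
  have yp1: "ypf X' (k0+1) = ypf X (k0+1)" using par0[OF r0] by (simp add: X'_def ypf_def upd_snd)
  have z1: "zf X' (k0+1) = zf X (k0+1)" using yp1 by (simp add: X'_def zf_def upd_fst)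
  have zk0: "zf X k0 = ypf X k0" using CD by (simp add: zf_def)
  have z0: "zf X' k0 = zf X k0 + 1" using CD yp0 zk0 by (simp add: X'_def zf_def upd_fst)
  have zm1: "zf X' (k0-1) = zf X (k0-1)" unfolding X'_def by (rule zf_other) auto
  have zk1: "zf X (k0+1) = fst X (k0+1)"
    using C3 evn[OF r0] by (simp add: zf_def ypf_def)
  have yp0v: "ypf X k0 = 2 * (snd X (k0-1) div 2)" using r0 by (simp add: ypf_def)
  have XX1: "XXf X (k0+1) = 2 * (snd X (k0-1) div 2)" using zk1 zk0 yp0v by (simp add: XXf_def)
  have XX1': "XXf X' (k0+1) = 2 * (snd X (k0-1) div 2) + 1" using zk1 z1 z0 zk0 yp0v by (simp add: XXf_def X'_def upd_fst)
  have XX0: "XXf X k0 = XXf X' k0 + 2" using z0 zk0 zm1 CD by (simp add: XXf_def X'_def upd_fst)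
  have XX2: "XXf X' (k0+2) = XXf X (k0+2)" using z1 by (simp add: XXf_def X'_def upd_fst zf_other add.commute)
  have XX3: "XXf X' (k0+3) = XXf X (k0+3)" unfolding X'_def by (rule XXf_other) auto
  have XXm1: "XXf X' (k0-1) = XXf X (k0-1)" unfolding X'_def by (rule XXf_other) auto
  have F: "Fmap X' = upd (Fmap X) (k0+1)"
  proof (rule assemble)
    show "XXf X' k0 mod 2 + 2 * (XXf X' (k0-1) div 2) = (if k0 = k0+1 then fst (Fmap X) k0 - 1 else fst (Fmap X) k0)"
      using XX0 XXm1 by (simp add: Fmap_fst)
    show "XXf X' (k0+1) mod 2 + 2 * (XXf X' k0 div 2) = (if k0+1 = k0+1 then fst (Fmap X) (k0+1) - 1 else fst (Fmap X) (k0+1))"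
      using XX0 XX1 XX1' by (simp add: Fmap_fst m2a)
    show "XXf X' (k0+2) mod 2 + 2 * (XXf X' (k0+1) div 2) = (if k0+2 = k0+1 then fst (Fmap X) (k0+2) - 1 else fst (Fmap X) (k0+2))"
      using XX1 XX1' XX2 by (simp add: Fmap_fst add.commute m2a)
    show "XXf X' (k0+3) mod 2 + 2 * (XXf X' (k0+2) div 2) = (if k0+3 = k0+1 then fst (Fmap X) (k0+3) - 1 else fst (Fmap X) (k0+3))"
      using XX3 XX2 by (simp add: Fmap_fst add.commute)
    show "ypf X' k0 - zf X' k0 + zf X' (k0-1) = (if k0 = k0+1 then snd (Fmap X) k0 + 1 else snd (Fmap X) k0)"
      using yp0 z0 zm1 zk0 by (simp add: Fmap_snd)
    show "ypf X' (k0+1) - zf X' (k0+1) + zf X' k0 = (if k0+1 = k0+1 then snd (Fmap X) (k0+1) + 1 else snd (Fmap X) (k0+1))"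
      using yp1 z1 z0 by (simp add: Fmap_snd)
    show "ypf X' (k0+2) - zf X' (k0+2) + zf X' (k0+1) = (if k0+2 = k0+1 then snd (Fmap X) (k0+2) + 1 else snd (Fmap X) (k0+2))"
      using z1 by (simp add: Fmap_snd X'_def ypf_other zf_other add.commute)
  qed (auto simp: X'_def XXf_other ypf_other zf_other)
  have "cX X k0 < int (fst X k0) - int (snd X (k0-1))"
    using CD yp0v dm2[of "snd X (k0-1)"] dm2(2)[of "XXf X k0"] unfolding cX_def by linarith
  moreover have "cX X (k0+1) = 0" using XX1 r0 unfolding cX_def by simp
  ultimately show ?thesis using F X'_def by simp
qed

lemma c0_odd:
  assumes C1: "snd X (k0-1) < fst X k0" and C2: "snd X (k0-2) + snd X (k0-1) < fst X (k0-1) + fst X k0"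
  and r0: "snd X k0 mod 2 = 1"
  shows "cX X k0 < int (fst X k0) - int (snd X (k0-1))"
proof -
  have xx: "XXf X k0 mod 2 \<le> 1" by simp
  consider (t) "fst X k0 = snd X (k0-1) + 1 \<and> snd X (k0-1) mod 2 = 0"
    | (a) "snd X (k0-1) mod 2 = 0" "fst X k0 \<ge> snd X (k0-1) + 2"
    | (b) "snd X (k0-1) mod 2 = 1" using mod2_cases C1 by fastforce
  then show ?thesis
  proof cases
    case t
    have yp0v: "ypf X k0 = snd X (k0-1) + 1" using r0 t evn[of "snd X (k0-1)"] by (simp add: ypf_def)
    have zk0: "zf X k0 = fst X k0" using t yp0v by (simp add: zf_def)
    have le: "snd X (k0-2) \<le> fst X (k0-1)" using C2 t by linarith
    have h2: "2 * (snd X (k0-2) div 2) \<le> snd X (k0-2)" by simp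
    have "zf X (k0-1) = 2 * (snd X (k0-2) div 2)"
      unfolding zf_def ypf_def using le t h2 by simp
    then have "XXf X k0 = 2 * (snd X (k0-2) div 2)" using zk0 by (simp add: XXf_def)
    then have "XXf X k0 mod 2 = 0" by simp
    then have "cX X k0 = 0" using t by (simp add: cX_def)
    then show ?thesis using t by simp
  next
    case a
    have "cX X k0 \<le> 1" using xx a by (simp add: cX_def)
    moreover have "int (fst X k0) - int (snd X (k0-1)) \<ge> 2" using a(2) by linarith
    ultimately show ?thesis by linarith
  next
    case b
    have "cX X k0 \<le> 0" using xx b by (simp add: cX_def)
    moreover have "int (fst X k0) - int (snd X (k0-1)) \<ge> 1" using C1 by linarith
    ultimately show ?thesis by linarith
  qed
qed

lemma caseE:
  assumes C1: "snd X (k0-1) < fst X k0" and C3: "fst X (k0+1) \<le> snd X k0"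
  and r0: "snd X k0 mod 2 = 1" and E: "\<not> (snd X (k0+1) mod 2 = 0 \<and> fst X (k0+1) = snd X k0)"
  shows "Fmap (upd X k0) = upd (Fmap X) (k0+1) \<and> cX X (k0+1) = 0"
proof -
  define X' where "X' = upd X k0"
  define q where "q = snd X (k0-1) div 2"
  have yp0v: "ypf X k0 = 2 * q + 1" using r0 by (simp add: ypf_def q_def)
  have yp0: "ypf X' k0 = 2 * q" using par1[OF r0] by (simp add: X'_def ypf_def upd_snd q_def)
  have yp1: "ypf X' (k0+1) = ypf X (k0+1) + 2" using par1[OF r0] by (simp add: X'_def ypf_def upd_snd)
  have zk0: "zf X k0 = 2 * q + 1" using C1 yp0v dm2[of "snd X (k0-1)"] by (simp add: zf_def q_def)
  have z0: "zf X' k0 = 2 * q" using C1 yp0 dm2[of "snd X (k0-1)"] by (simp add: X'_def zf_def upd_fst q_def)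
  have zm1: "zf X' (k0-1) = zf X (k0-1)" unfolding X'_def by (rule zf_other) auto
  have yk0: "snd X k0 = 2 * (snd X k0 div 2) + 1" using odd1[OF r0] .
  have zk1: "zf X (k0+1) = fst X (k0+1)"
  proof -
    have "fst X (k0+1) \<le> ypf X (k0+1)"
      using C3 E yk0 dm2[of "snd X (k0+1)"] unfolding ypf_def by (simp, linarith)
    then show ?thesis by (simp add: zf_def)
  qed
  have z1: "zf X' (k0+1) = fst X (k0+1)"
    using zk1 yp1 by (simp add: X'_def zf_def upd_fst)
  have XX0: "XXf X' k0 = XXf X k0" using z0 zk0 zm1 C1 by (simp add: XXf_def X'_def upd_fst)
  have XX1: "XXf X (k0+1) = 2 * q + 1" using zk1 zk0 by (simp add: XXf_def)
  have XX1': "XXf X' (k0+1) = 2 * q" using z1 z0 by (simp add: XXf_def X'_def upd_fst)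
  have XX2: "XXf X' (k0+2) = XXf X (k0+2)" using z1 zk1 by (simp add: XXf_def X'_def upd_fst zf_other add.commute)
  have XX3: "XXf X' (k0+3) = XXf X (k0+3)" unfolding X'_def by (rule XXf_other) auto
  have XXm1: "XXf X' (k0-1) = XXf X (k0-1)" unfolding X'_def by (rule XXf_other) auto
  have F: "Fmap X' = upd (Fmap X) (k0+1)"
  proof (rule assemble)
    show "XXf X' k0 mod 2 + 2 * (XXf X' (k0-1) div 2) = (if k0 = k0+1 then fst (Fmap X) k0 - 1 else fst (Fmap X) k0)"
      using XX0 XXm1 by (simp add: Fmap_fst)
    show "XXf X' (k0+1) mod 2 + 2 * (XXf X' k0 div 2) = (if k0+1 = k0+1 then fst (Fmap X) (k0+1) - 1 else fst (Fmap X) (k0+1))"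
      using XX0 XX1 XX1' by (simp add: Fmap_fst m2a)
    show "XXf X' (k0+2) mod 2 + 2 * (XXf X' (k0+1) div 2) = (if k0+2 = k0+1 then fst (Fmap X) (k0+2) - 1 else fst (Fmap X) (k0+2))"
      using XX1 XX1' XX2 by (simp add: Fmap_fst add.commute m2a)
    show "XXf X' (k0+3) mod 2 + 2 * (XXf X' (k0+2) div 2) = (if k0+3 = k0+1 then fst (Fmap X) (k0+3) - 1 else fst (Fmap X) (k0+3))"
      using XX3 XX2 by (simp add: Fmap_fst add.commute)
    show "ypf X' k0 - zf X' k0 + zf X' (k0-1) = (if k0 = k0+1 then snd (Fmap X) k0 + 1 else snd (Fmap X) k0)"
      using yp0 z0 zm1 zk0 yp0v by (simp add: Fmap_snd)
    show "ypf X' (k0+1) - zf X' (k0+1) + zf X' k0 = (if k0+1 = k0+1 then snd (Fmap X) (k0+1) + 1 else snd (Fmap X) (k0+1))"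
      using yp1 z1 z0 zk1 zk0 by (simp add: Fmap_snd zf_def)
    show "ypf X' (k0+2) - zf X' (k0+2) + zf X' (k0+1) = (if k0+2 = k0+1 then snd (Fmap X) (k0+2) + 1 else snd (Fmap X) (k0+2))"
      using z1 zk1 by (simp add: Fmap_snd X'_def ypf_other zf_other add.commute)
  qed (auto simp: X'_def XXf_other ypf_other zf_other)
  have "cX X (k0+1) = 0" using XX1 r0 unfolding cX_def by simp
  then show ?thesis using F X'_def by simp
qed

lemma caseG:
  assumes C1: "snd X (k0-1) < fst X k0" and C4: "fst X (k0+1) + fst X (k0+2) \<le> snd X k0 + snd X (k0+1)"
  and r0: "snd X k0 mod 2 = 1" and G: "snd X (k0+1) mod 2 = 0" "fst X (k0+1) = snd X k0"
  shows "Fmap (upd X k0) = upd (Fmap X) (k0+2) \<and> cX X (k0+1) < 0 \<and> cX X (k0+2) = int (snd X k0) - int (fst X (k0+1))"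
proof -
  define X' where "X' = upd X k0"
  define q where "q = snd X (k0-1) div 2"
  define p where "p = snd X k0 div 2"
  have yk0: "snd X k0 = 2 * p + 1" using odd1[OF r0] p_def by simp
  have yp0v: "ypf X k0 = 2 * q + 1" using r0 by (simp add: ypf_def q_def)
  have yp0: "ypf X' k0 = 2 * q" using par1[OF r0] by (simp add: X'_def ypf_def upd_snd q_def)
  have yp1v: "ypf X (k0+1) = 2 * p" using G(1) by (simp add: ypf_def p_def)
  have yp1: "ypf X' (k0+1) = 2 * p + 2" using par1[OF r0] G(1) by (simp add: X'_def ypf_def upd_snd p_def)
  have zk0: "zf X k0 = 2 * q + 1" using C1 yp0v dm2[of "snd X (k0-1)"] by (simp add: zf_def q_def)
  have z0: "zf X' k0 = 2 * q" using C1 yp0 dm2[of "snd X (k0-1)"] by (simp add: X'_def zf_def upd_fst q_def)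
  have zm1: "zf X' (k0-1) = zf X (k0-1)" unfolding X'_def by (rule zf_other) auto
  have zk1: "zf X (k0+1) = 2 * p" using yp1v G(2) yk0 by (simp add: zf_def)
  have z1: "zf X' (k0+1) = 2 * p + 1" using yp1 G(2) yk0 by (simp add: X'_def zf_def upd_fst)
  have zk2: "zf X (k0+2) = fst X (k0+2)"
  proof -
    have i: "k0 + 2 - 1 = k0 + 1" by simp
    have "fst X (k0+2) \<le> ypf X (k0+2)"
      using C4 G dm2[of "snd X (k0+1)"] unfolding ypf_def i by linarith
    then show ?thesis by (simp add: zf_def)
  qed
  have XX0: "XXf X' k0 = XXf X k0" using z0 zk0 zm1 C1 by (simp add: XXf_def X'_def upd_fst)
  have XX1: "XXf X (k0+1) = 2 * q + 2" using zk1 zk0 G(2) yk0 by (simp add: XXf_def)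
  have XX1': "XXf X' (k0+1) = 2 * q" using z1 z0 G(2) yk0 by (simp add: XXf_def X'_def upd_fst)
  have XX2: "XXf X (k0+2) = 2 * p" using zk2 zk1 by (simp add: XXf_def add.commute)
  have XX2': "XXf X' (k0+2) = 2 * p + 1" using zk2 z1 by (simp add: XXf_def X'_def upd_fst zf_other add.commute)
  have XX3: "XXf X' (k0+3) = XXf X (k0+3)" unfolding X'_def by (rule XXf_other) auto
  have XXm1: "XXf X' (k0-1) = XXf X (k0-1)" unfolding X'_def by (rule XXf_other) auto
  have F: "Fmap X' = upd (Fmap X) (k0+2)"
  proof (rule assemble)
    show "XXf X' k0 mod 2 + 2 * (XXf X' (k0-1) div 2) = (if k0 = k0+2 then fst (Fmap X) k0 - 1 else fst (Fmap X) k0)"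
      using XX0 XXm1 by (simp add: Fmap_fst)
    show "XXf X' (k0+1) mod 2 + 2 * (XXf X' k0 div 2) = (if k0+1 = k0+2 then fst (Fmap X) (k0+1) - 1 else fst (Fmap X) (k0+1))"
      using XX0 XX1 XX1' by (simp add: Fmap_fst m2a)
    have e: "(2 * q + 2) div 2 = q + 1" "(2 * q + 2) mod 2 = (0::nat)" by simp_all
    show "XXf X' (k0+2) mod 2 + 2 * (XXf X' (k0+1) div 2) = (if k0+2 = k0+2 then fst (Fmap X) (k0+2) - 1 else fst (Fmap X) (k0+2))"
      using XX1 XX1' XX2 XX2' e by (simp add: Fmap_fst add.commute m2a)
    show "XXf X' (k0+3) mod 2 + 2 * (XXf X' (k0+2) div 2) = (if k0+3 = k0+2 then fst (Fmap X) (k0+3) - 1 else fst (Fmap X) (k0+3))"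
      using XX3 XX2 XX2' by (simp add: Fmap_fst add.commute m2a)
    show "ypf X' k0 - zf X' k0 + zf X' (k0-1) = (if k0 = k0+2 then snd (Fmap X) k0 + 1 else snd (Fmap X) k0)"
      using yp0 z0 zm1 zk0 yp0v by (simp add: Fmap_snd)
    show "ypf X' (k0+1) - zf X' (k0+1) + zf X' k0 = (if k0+1 = k0+2 then snd (Fmap X) (k0+1) + 1 else snd (Fmap X) (k0+1))"
      using yp1 z1 z0 zk1 zk0 yp1v by (simp add: Fmap_snd)
    show "ypf X' (k0+2) - zf X' (k0+2) + zf X' (k0+1) = (if k0+2 = k0+2 then snd (Fmap X) (k0+2) + 1 else snd (Fmap X) (k0+2))"
      using z1 zk1 by (simp add: Fmap_snd X'_def ypf_other zf_other add.commute)
  qed (auto simp: X'_def XXf_other ypf_other zf_other)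
  have "cX X (k0+1) < 0" using XX1 r0 unfolding cX_def by simp
  moreover have "cX X (k0+2) = int (snd X k0) - int (fst X (k0+1))" using XX2 G unfolding cX_def by (simp add: add.commute)
  ultimately show ?thesis using F X'_def by simp
qed



lemma LB: "cX X j \<le> max 0 (max (int (fst X j) - int (snd X (j-1))) (int (snd X (j-2)) - int (fst X (j-1))))"
proof (rule ccontr)
  assume neg: "\<not> ?thesis"
  have xx: "XXf X j mod 2 \<le> 1" "snd X (j-1) mod 2 \<le> 1" by simp_all
  have c1: "cX X j \<ge> 1" using neg by simp
  then have a: "XXf X j mod 2 = 1" "snd X (j-1) mod 2 = 0" using xx unfolding cX_def by linarith+
  have cl: "cX X j \<le> 1" using xx unfolding cX_def by linarith
  have n1: "cX X j > int (fst X j) - int (snd X (j-1))" "cX X j > int (snd X (j-2)) - int (fst X (j-1))"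
    using neg by simp_all
  have b: "fst X j \<le> snd X (j-1)" "snd X (j-2) \<le> fst X (j-1)" using n1 cl by linarith+
  have i: "j - 1 - 1 = j - 2" by simp
  have "ypf X j \<ge> fst X j" using b(1) a(2) evn[of "snd X (j-1)"] unfolding ypf_def by linarith
  then have zj: "zf X j = fst X j" by (simp add: zf_def)
  have h2: "2 * (snd X (j-2) div 2) \<le> snd X (j-2)" by simp
  have "zf X (j-1) = 2 * (snd X (j-2) div 2)" unfolding zf_def ypf_def i using a(2) b(2) h2 by simp
  then have "XXf X j = 2 * (snd X (j-2) div 2)" using zj by (simp add: XXf_def)
  then show False using a(1) by simp
qed

lemma zero_below_loc:
  assumes "zero_below lo X" "i < lo"
  shows "XXf X i = 0" "zf X i = 0" "ypf X i = 0" "snd X (i-1) = 0"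
  using assms unfolding zero_below_def XXf_def zf_def ypf_def by auto

lemma zero_below_F: "zero_below lo X \<Longrightarrow> zero_below lo (Fmap X)"
  unfolding zero_below_def[of lo "Fmap X"] Fmap_fst Fmap_snd
  using zero_below_loc by (auto)

lemma zero_above_F:
  assumes "zero_above hi X"
  shows "zero_above (hi+3) (Fmap X)"
proof -
  have z: "zf X m = 0" if "m > hi" for m using assms that unfolding zero_above_def zf_def by simp
  have XX: "XXf X m = 0" if "m > hi + 1" for m
    using assms that z[of m] z[of "m-1"] unfolding zero_above_def XXf_def by simp
  have yp: "ypf X m = 0" if "m > hi + 1" for m
    using assms that unfolding zero_above_def ypf_def by simp
  show ?thesis unfolding zero_above_def Fmap_fst Fmap_snd
    using XX yp z by simp
qed

lemma T_step: "zero_below lo X \<Longrightarrow> T lo X (k+1) = T lo X k + int (fst X (k+1)) - int (snd X k)"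
  using U_step[of lo X k] unfolding T_def by simp

lemma loc_id:
  "int (fst (Fmap X) (k+1)) - int (snd (Fmap X) k)
     = int (fst X k) - int (snd X (k-1)) + cX X (k+1) - cX X k"
proof -
  have zx: "zf X k \<le> fst X k" "zf X k \<le> ypf X k" by (simp_all add: zf_def)
  have e1: "int (XXf X k) = int (fst X k) - int (zf X k) + int (zf X (k-1))"
    using zx by (simp add: XXf_def of_nat_diff)
  have e2: "int (snd (Fmap X) k) = int (ypf X k) - int (zf X k) + int (zf X (k-1))"
    using zx by (simp add: Fmap_snd of_nat_diff)
  have e3: "int (ypf X k) = int (snd X k mod 2) + 2 * int (snd X (k-1) div 2)"
    by (simp add: ypf_def)
  have e4: "int (XXf X k) = 2 * int (XXf X k div 2) + int (XXf X k mod 2)"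
    using dm2(1)[of "XXf X k"] by linarith
  have e5: "int (snd X (k-1)) = 2 * int (snd X (k-1) div 2) + int (snd X (k-1) mod 2)"
    using dm2(1)[of "snd X (k-1)"] by linarith
  have e6: "int (fst (Fmap X) (k+1)) = int (XXf X (k+1) mod 2) + 2 * int (XXf X k div 2)"
    by (simp add: Fmap_fst)
  have e7: "cX X (k+1) = int (XXf X (k+1) mod 2) - int (snd X k mod 2)"
    by (simp add: cX_def)
  have e8: "cX X k = int (XXf X k mod 2) - int (snd X (k-1) mod 2)"
    by (simp add: cX_def)
  show ?thesis using e1 e2 e3 e4 e5 e6 e7 e8 by linarith
qed

lemma T_F:
  assumes zb: "zero_below lo X"
  shows "T lo (Fmap X) k = T lo X (k-1) + cX X k"
proof -
  have zbF: "zero_below lo (Fmap X)" using zero_below_F[OF zb] .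
  have low: "T lo (Fmap X) k = T lo X (k-1) + cX X k" if "k < lo" for k
  proof -
    have "T lo (Fmap X) k = 0" using T_below[OF zbF that] .
    moreover have "T lo X (k-1) = 0" using T_below[OF zb] that by simp
    moreover have "cX X k = 0" using zero_below_loc[OF zb that] by (simp add: cX_def)
    ultimately show ?thesis by simp
  qed
  show ?thesis
  proof (cases "k < lo")
    case True then show ?thesis using low by simp
  next
    case False
    then have "lo - 1 \<le> k" by simp
    then show ?thesis
    proof (induction k rule: int_ge_induct)
      case base then show ?case using low by simp
    next
      case (step i)
      have "T lo (Fmap X) (i+1) = T lo (Fmap X) i + int (fst (Fmap X) (i+1)) - int (snd (Fmap X) i)"
        using T_step[OF zbF] .
      also have "\<dots> = T lo X (i-1) + cX X i + int (fst X i) - int (snd X (i-1)) + cX X (i+1) - cX X i"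
        using step.IH loc_id[of X i] by simp
      also have "\<dots> = T lo X i + cX X (i+1)"
        using T_step[OF zb, of "i-1"] by simp
      finally show ?case by simp
    qed
  qed
qed

lemma T_F_bound:
  assumes zb: "zero_below lo X"
  shows "T lo (Fmap X) k \<le> max (T lo X (k-2)) (max (T lo X (k-1)) (T lo X k))"
proof -
  have s1: "T lo X k = T lo X (k-1) + int (fst X k) - int (snd X (k-1))"
    using T_step[OF zb, of "k-1"] by simp
  have s2: "T lo X (k-1) = T lo X (k-2) + int (fst X (k-1)) - int (snd X (k-2))"
    using T_step[OF zb, of "k-2"] by (simp add: algebra_simps)
  show ?thesis using T_F[OF zb, of k] LB[of X k] s1 s2 by linarith
qed

lemma condT_unique: "condT f a \<Longrightarrow> condT f b \<Longrightarrow> a = b"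
  unfolding condT_def by (metis linorder_neqE not_le)



lemma bounds:
  assumes "two_rowed X"
  obtains lo hi where "lo \<le> hi" "zero_below lo X" "zero_above hi X"
proof -
  let ?S = "insert 0 (arr_supp X)"
  have fin: "finite ?S" using assms unfolding two_rowed_def by simp
  have "Min ?S \<le> 0" "0 \<le> Max ?S" using fin by simp_all
  then have "Min ?S \<le> Max ?S" by simp
  moreover have "zero_below (Min ?S) X"
    unfolding zero_below_def
  proof (intro allI impI)
    fix i assume "i < Min ?S"
    then have "i \<notin> arr_supp X" using fin Min_le by (metis insertCI not_le)
    then show "fst X i = 0 \<and> snd X i = 0" unfolding arr_supp_def by simp
  qed
  moreover have "zero_above (Max ?S) X"
    unfolding zero_above_def
  proof (intro allI impI)
    fix i assume "i > Max ?S"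
    then have "i \<notin> arr_supp X" using fin Max_ge by (metis insertCI not_le)
    then show "fst X i = 0 \<and> snd X i = 0" unfolding arr_supp_def by simp
  qed
  ultimately show ?thesis using that by blast
qed

lemma partB_all:
  assumes zb: "zero_below lo X" and cb: "condT (T lo X) b"
  shows "\<exists>k1. Fmap (upd X b) = upd (Fmap X) k1 \<and> condT (T lo (Fmap X)) k1"
proof -
  let ?T = "T lo X"
  let ?F = "T lo (Fmap X)"
  have st: "?T (k+1) = ?T k + int (fst X (k+1)) - int (snd X k)" for k using T_step[OF zb] .
  have lt: "?T j < ?T b" if "j < b" for j using cb that unfolding condT_def by blast
  have ge: "?T j \<le> ?T b" if "j > b" for j using cb that unfolding condT_def by blast
  have all: "?T j \<le> ?T b" for j
  proof (cases "j < b")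
    case True then show ?thesis using lt[of j] by simp
  next
    case False then show ?thesis using ge[of j] by (cases "j = b") auto
  qed
  have i1: "b - 1 + 1 = b" "b - 2 + 1 = b - 1" "b + 1 + 1 = b + 2" by simp_all
  have s1: "?T b = ?T (b-1) + int (fst X b) - int (snd X (b-1))" using st[of "b-1"] i1 by simp
  have s2: "?T (b-1) = ?T (b-2) + int (fst X (b-1)) - int (snd X (b-2))" using st[of "b-2"] i1 by simp
  have s3: "?T (b+1) = ?T b + int (fst X (b+1)) - int (snd X b)" using st[of b] by simp
  have s4: "?T (b+2) = ?T (b+1) + int (fst X (b+2)) - int (snd X (b+1))" using st[of "b+1"] i1 by simp
  have l1: "?T (b-1) < ?T b" "?T (b-2) < ?T b" using lt by simp_all
  have g1: "?T (b+1) \<le> ?T b" "?T (b+2) \<le> ?T b" using ge by simp_all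
  have C1: "snd X (b-1) < fst X b" using l1 s1 by linarith
  have C2: "snd X (b-2) + snd X (b-1) < fst X (b-1) + fst X b" using l1 s1 s2 by linarith
  have C3: "fst X (b+1) \<le> snd X b" using g1 s3 by linarith
  have C4: "fst X (b+1) + fst X (b+2) \<le> snd X b + snd X (b+1)" using g1 s3 s4 by linarith
  have Fle: "?F j \<le> ?T b" for j
  proof -
    have "max (?T (j-2)) (max (?T (j-1)) (?T j)) \<le> ?T b" using all by simp
    then show ?thesis using T_F_bound[OF zb, of j] by linarith
  qed
  have Flt: "?F j < ?T b" if "j < b" for j
  proof -
    have "max (?T (j-2)) (max (?T (j-1)) (?T j)) < ?T b" using lt that by simp
    then show ?thesis using T_F_bound[OF zb, of j] by linarith
  qed
  have Fk: "?F k = ?T (k-1) + cX X k" for k using T_F[OF zb] .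
  have mk: "condT ?F k1" if "?F k1 = ?T b" "\<forall>j. b \<le> j \<and> j < k1 \<longrightarrow> ?F j < ?T b" for k1
    unfolding condT_def
  proof (intro conjI allI impI)
    fix j assume "j < k1"
    then show "?F j < ?F k1" using that Flt[of j] by (cases "j < b") auto
  next
    fix j assume "j > k1"
    then show "?F j \<le> ?F k1" using that Fle[of j] by simp
  qed
  have Tb1: "?T (b-1) = ?T b - int (fst X b) + int (snd X (b-1))" using s1 by simp
  have Tb2: "?T (b+1) = ?T b + int (fst X (b+1)) - int (snd X b)" using s3 by simp
  consider "snd X b mod 2 = 0" | "snd X b mod 2 = 1" by (metis mod2_cases)
  then show ?thesis
  proof cases
    case 1
    have "ypf X b \<le> snd X (b-1)" using 1 dm2[of "snd X (b-1)"] unfolding ypf_def by linarith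
    then have "fst X b = ypf X b + 1 \<or> fst X b \<ge> ypf X b + 2" using C1 by linarith
    then consider (B) "fst X b = ypf X b + 1" | (CD) "fst X b \<ge> ypf X b + 2" by blast
    then show ?thesis
    proof cases
      case B
      from caseB[OF C1 C2 1 B] have r: "Fmap (upd X b) = upd (Fmap X) b" "cX X b = int (fst X b) - int (snd X (b-1))" by blast+
      have "condT ?F b"
      proof (rule mk)
        show "?F b = ?T b" using Fk[of b] r(2) Tb1 by simp
      qed simp
      then show ?thesis using r by blast
    next
      case CD
      from caseCD[OF C1 C3 1 CD] have r: "Fmap (upd X b) = upd (Fmap X) (b+1)"
        "cX X b < int (fst X b) - int (snd X (b-1))" "cX X (b+1) = 0" by blast+
      have "condT ?F (b+1)"
      proof (rule mk)
        show "?F (b+1) = ?T b" using Fk[of "b+1"] r by simp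
        show "\<forall>j. b \<le> j \<and> j < b + 1 \<longrightarrow> ?F j < ?T b"
        proof (intro allI impI)
          fix j assume "b \<le> j \<and> j < b + 1"
          then have "j = b" by simp
          then show "?F j < ?T b" using Fk[of b] r Tb1 by simp
        qed
      qed
      then show ?thesis using r by blast
    qed
  next
    case 2
    have c0: "cX X b < int (fst X b) - int (snd X (b-1))" using c0_odd[OF C1 C2 2] .
    show ?thesis
    proof (cases "snd X (b+1) mod 2 = 0 \<and> fst X (b+1) = snd X b")
      case True
      from caseG[OF C1 C4 2 conjunct1[OF True] conjunct2[OF True]] have r: "Fmap (upd X b) = upd (Fmap X) (b+2)"
        "cX X (b+1) < 0" "cX X (b+2) = int (snd X b) - int (fst X (b+1))" by blast+
      have "condT ?F (b+2)"
      proof (rule mk)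
        show "?F (b+2) = ?T b" using Fk[of "b+2"] r Tb2 by (simp add: add.commute)
        show "\<forall>j. b \<le> j \<and> j < b + 2 \<longrightarrow> ?F j < ?T b"
        proof (intro allI impI)
          fix j assume "b \<le> j \<and> j < b + 2"
          then have "j = b \<or> j = b + 1" by auto
          then show "?F j < ?T b" using Fk[of b] Fk[of "b+1"] r c0 Tb1 by auto
        qed
      qed
      then show ?thesis using r by blast
    next
      case False
      from caseE[OF C1 C3 2 False] have r: "Fmap (upd X b) = upd (Fmap X) (b+1)" "cX X (b+1) = 0" by blast+
      have "condT ?F (b+1)"
      proof (rule mk)
        show "?F (b+1) = ?T b" using Fk[of "b+1"] r by simp
        show "\<forall>j. b \<le> j \<and> j < b + 1 \<longrightarrow> ?F j < ?T b"
        proof (intro allI impI)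
          fix j assume "b \<le> j \<and> j < b + 1"
          then have "j = b" by simp
          then show "?F j < ?T b" using Fk[of b] c0 Tb1 by simp
        qed
      qed
      then show ?thesis using r by blast
    qed
  qed
qed

theorem mainTheorem8:
  fixes X :: array2
  assumes "two_rowed X" and "reduced_array X"
  shows "map_option Fmap (ftilde X) = ftilde (Fmap X)"
proof -
  obtain lo hi where lohi: "lo \<le> hi" and zb: "zero_below lo X" and za: "zero_above hi X"
    using bounds[OF assms(1)] by blast
  have zbF: "zero_below lo (Fmap X)" using zero_below_F[OF zb] .
  have zaF: "zero_above (hi+3) (Fmap X)" using zero_above_F[OF za] .
  have lohi3: "lo \<le> hi + 3" using lohi by simp
  note PX = partA[OF zb za lohi]
  note PF = partA[OF zbF zaF lohi3]
  show ?thesis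
  proof (cases "\<exists>b. condT (T lo X) b \<and> ftilde X = Some (upd X b)")
    case True
    then obtain b where b: "condT (T lo X) b" "ftilde X = Some (upd X b)" by blast
    obtain k1 where k1: "Fmap (upd X b) = upd (Fmap X) k1" "condT (T lo (Fmap X)) k1"
      using partB_all[OF zb b(1)] by blast
    have pos: "T lo (Fmap X) k1 > 0"
    proof -
      have "T lo (Fmap X) (min k1 lo - 1) < T lo (Fmap X) k1" using k1(2) unfolding condT_def by simp
      moreover have "T lo (Fmap X) (min k1 lo - 1) = 0" using T_below[OF zbF] by simp
      ultimately show ?thesis by simp
    qed
    have "ftilde (Fmap X) = Some (upd (Fmap X) k1)"
      using PF
    proof
      assume "\<exists>b'. condT (T lo (Fmap X)) b' \<and> ftilde (Fmap X) = Some (upd (Fmap X) b')"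
      then obtain b' where "condT (T lo (Fmap X)) b'" "ftilde (Fmap X) = Some (upd (Fmap X) b')" by blast
      then show ?thesis using condT_unique[OF k1(2)] by metis
    next
      assume "ftilde (Fmap X) = None \<and> (\<forall>j. T lo (Fmap X) j \<le> 0)"
      then have "T lo (Fmap X) k1 \<le> 0" by blast
      then show ?thesis using pos by simp
    qed
    then show ?thesis using b(2) k1(1) by simp
  next
    case False
    then have nX: "ftilde X = None" "\<forall>j. T lo X j \<le> 0" using PX by blast+
    have "ftilde (Fmap X) = None"
      using PF
    proof
      assume "\<exists>b'. condT (T lo (Fmap X)) b' \<and> ftilde (Fmap X) = Some (upd (Fmap X) b')"
      then obtain b' where c: "condT (T lo (Fmap X)) b'" by blast
      have "T lo (Fmap X) (min b' lo - 1) < T lo (Fmap X) b'" using c unfolding condT_def by simp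
      moreover have "T lo (Fmap X) (min b' lo - 1) = 0" using T_below[OF zbF] by simp
      moreover have "T lo (Fmap X) b' \<le> 0"
        using T_F_bound[OF zb, of b'] nX(2) by (metis max.absorb_iff2 max.bounded_iff)
      ultimately show ?thesis by simp
    next
      assume "ftilde (Fmap X) = None \<and> (\<forall>j. T lo (Fmap X) j \<le> 0)"
      then show ?thesis by simp
    qed
    then show ?thesis using nX(1) by simp
  qed
qed


end
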